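(* Let $H_0$ be a bounded operator on a Hilbert space with $\|H_0\|=1$, finite-dimensional kernel, and a bounded reflexive generalized inverse $H_0^{(-1)}$; write $\varkappa=\varkappa(H_0,H_0^{(-1)})$. Let $w$ be bounded with $\|w\|=1$ and $0\le\lambda<1/(2\varkappa)$, and assume $\dim\mathrm{Ker}(H_0+\lambda w)=\dim\mathrm{Ker}\,H_0$. Then $$\sin\theta_{\max}(w,\lambda)\le\frac{\lambda\varkappa}{\sqrt{1-2\lambda\varkappa}}.$$ Consequently, if $\dim\mathrm{Ker}(H_0+\lambda w)=\dim\mathrm{Ker}H_0$ for all small $\lambda>0$, then $\limsup_{\lambda\to0^+}\theta_{\max}(w,\lambda)/\lambda\le\varkappa$; in particular the sensitivity satisfies $\mathcal{X}(w)\le\varkappa$ and $\mathcal{X}\le\varkappa$.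
   Context: A reflexive generalized inverse of $H_0$ is $H_0^{(-1)}$ with $H_0^{(-1)}H_0H_0^{(-1)}=H_0^{(-1)}$, $H_0H_0^{(-1)}H_0=H_0$; $\varkappa(H_0,H_0^{(-1)}):=\|H_0\|\|H_0^{(-1)}\|$. For closed subspaces, $P_{\mathcal{V}}$ denotes the orthogonal projector; the maximal angle $\theta_{\max}(w,\lambda)\in[0,\pi/2]$ is defined by $\sin\theta_{\max}(w,\lambda)=\|P_{\mathrm{Ker}(H_0+\lambda w)}-P_{\mathrm{Ker}H_0}\|$. The sensitivity to $w$ is $\mathcal{X}(w):=\frac{d}{d\lambda}\theta_{\max}(w,\lambda)|_{\lambda=0^+}$ (right derivative), and $\mathcal{X}:=\sup_{\|w\|=1}\mathcal{X}(w)$ over perturbations $w$ in a given symmetry class. *)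

theory Defs
  imports "HOL-Analysis.Analysis"
begin

definition kernel :: "('a::real_normed_vector \<Rightarrow>\<^sub>L 'b::real_normed_vector) \<Rightarrow> 'a set" where
  "kernel H = {x. blinfun_apply H x = 0}"

definition fin_dim :: "'a::real_vector set \<Rightarrow> bool" where
  "fin_dim V \<longleftrightarrow> (\<exists>B. finite B \<and> span B = V)"

definition refl_ginv :: "('a::real_normed_vector \<Rightarrow>\<^sub>L 'a) \<Rightarrow> ('a \<Rightarrow>\<^sub>L 'a) \<Rightarrow> bool" where
  "refl_ginv H G \<longleftrightarrow> G o\<^sub>L H o\<^sub>L G = G \<and> H o\<^sub>L G o\<^sub>L H = H"

definition kappa :: "('a::real_normed_vector \<Rightarrow>\<^sub>L 'a) \<Rightarrow> ('a \<Rightarrow>\<^sub>L 'a) \<Rightarrow> real" where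
  "kappa H G = norm H * norm G"

definition orth_proj :: "'a::real_inner set \<Rightarrow> 'a \<Rightarrow> 'a" where
  "orth_proj V x = (THE v. v \<in> V \<and> (\<forall>u\<in>V. inner (x - v) u = 0))"

definition sin_theta_max :: "('a::real_inner \<Rightarrow>\<^sub>L 'a) \<Rightarrow> ('a \<Rightarrow>\<^sub>L 'a) \<Rightarrow> real \<Rightarrow> real" where
  "sin_theta_max H0 w l =
     onorm (\<lambda>x. orth_proj (kernel (H0 + l *\<^sub>R w)) x - orth_proj (kernel H0) x)"

definition theta_max :: "('a::real_inner \<Rightarrow>\<^sub>L 'a) \<Rightarrow> ('a \<Rightarrow>\<^sub>L 'a) \<Rightarrow> real \<Rightarrow> real" where
  "theta_max H0 w l = arcsin (sin_theta_max H0 w l)"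

definition sensitivity :: "('a::real_inner \<Rightarrow>\<^sub>L 'a) \<Rightarrow> ('a \<Rightarrow>\<^sub>L 'a) \<Rightarrow> real" where
  "sensitivity H0 w = (THE D. (theta_max H0 w has_real_derivative D) (at_right 0))"

definition same_kernel_dim :: "('a::real_inner \<Rightarrow>\<^sub>L 'a) \<Rightarrow> ('a \<Rightarrow>\<^sub>L 'a) \<Rightarrow> real \<Rightarrow> bool" where
  "same_kernel_dim H0 w l \<longleftrightarrow>
     fin_dim (kernel (H0 + l *\<^sub>R w)) \<and> dim (kernel (H0 + l *\<^sub>R w)) = dim (kernel H0)"

end

theory Submission
  imports Defs
begin


lemma proj_exists:
  fixes B :: "'a::real_inner set"
  assumes "finite B"
  shows "\<exists>v\<in>span B. \<forall>u\<in>span B. inner (x - v) u = 0"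
  using assms
proof (induction B arbitrary: x rule: finite_induct)
  case empty
  then show ?case by auto
next
  case (insert b B)
  from insert.IH obtain p where p: "\<And>z. p z \<in> span B" "\<And>z u. u \<in> span B \<Longrightarrow> inner (z - p z) u = 0"
    by metis
  define r where "r = b - p b"
  have rB: "inner r u = 0" if "u \<in> span B" for u using p(2)[OF that] r_def by simp
  show ?case
  proof (cases "r = 0")
    case True
    then have "b \<in> span B" using p(1)[of b] r_def by simp
    then have "span (insert b B) = span B" by (rule span_redundant)
    then show ?thesis using insert.IH[of x] by simp
  next
    case False
    define c where "c = inner (x - p x) r / inner r r"
    define v where "v = p x + c *\<^sub>R r"
    have rr: "inner r r \<noteq> 0" using False by simp
    have vin: "v \<in> span (insert b B)"
    proof -
      have sub: "span B \<subseteq> span (insert b B)" by (rule span_mono) auto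
      have "p x \<in> span (insert b B)" "p b \<in> span (insert b B)" using sub p(1) by auto
      moreover have "b \<in> span (insert b B)" by (rule span_base) simp
      ultimately show ?thesis unfolding v_def r_def by (intro span_add span_scale span_diff)
    qed
    have o1: "inner (x - v) w = 0" if "w \<in> span B" for w
      using p(2)[OF that, of x] rB[OF that] by (simp add: v_def inner_diff_left inner_add_left)
    have o2: "inner (x - v) r = 0"
      using rr by (simp add: v_def c_def inner_diff_left inner_add_left)
    have "inner (x - v) u = 0" if uin: "u \<in> span (insert b B)" for u
    proof -
      obtain k where k: "u - k *\<^sub>R b \<in> span B" using span_breakdown_eq[THEN iffD1, OF uin] by blast
      have u: "u = (u - k *\<^sub>R b) + k *\<^sub>R r + k *\<^sub>R p b" by (simp add: r_def algebra_simps)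
      show ?thesis
        apply (subst u)
        using o1[OF k] o2 o1[OF p(1)[of b]] by (simp add: inner_add_right)
    qed
    then show ?thesis using vin by blast
  qed
qed

lemma orth_proj_unique:
  fixes V :: "'a::real_inner set"
  assumes "subspace V" "v \<in> V" "\<forall>u\<in>V. inner (x - v) u = 0"
    "v' \<in> V" "\<forall>u\<in>V. inner (x - v') u = 0"
  shows "v = v'"
proof -
  have d: "v - v' \<in> V" using assms by (simp add: subspace_diff)
  have "inner (x - v') (v - v') - inner (x - v) (v - v') = 0" using assms d by simp
  then have "inner (v - v') (v - v') = 0" by (simp add: inner_diff_left algebra_simps)
  then show ?thesis by simp
qed

lemma orth_proj_props:
  fixes V :: "'a::real_inner set"
  assumes "fin_dim V"
  shows "orth_proj V x \<in> V" "\<And>u. u \<in> V \<Longrightarrow> inner (x - orth_proj V x) u = 0"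
proof -
  obtain B where B: "finite B" "span B = V" using assms fin_dim_def by blast
  have sub: "subspace V" using B subspace_span by blast
  have ex: "\<exists>!v. v \<in> V \<and> (\<forall>u\<in>V. inner (x - v) u = 0)"
    using proj_exists[OF B(1), of x] B(2) orth_proj_unique[OF sub] by blast
  have "orth_proj V x \<in> V \<and> (\<forall>u\<in>V. inner (x - orth_proj V x) u = 0)"
    unfolding orth_proj_def by (rule theI'[OF ex])
  then show "orth_proj V x \<in> V" "\<And>u. u \<in> V \<Longrightarrow> inner (x - orth_proj V x) u = 0" by auto
qed

lemma fin_dim_subspace: "fin_dim V \<Longrightarrow> subspace V"
  unfolding fin_dim_def using subspace_span by blast

lemma orth_proj_eqI:
  fixes V :: "'a::real_inner set"
  assumes "fin_dim V" "v \<in> V" "\<And>u. u \<in> V \<Longrightarrow> inner (x - v) u = 0"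
  shows "orth_proj V x = v"
proof (rule orth_proj_unique[OF fin_dim_subspace[OF assms(1)]])
  show "orth_proj V x \<in> V" "\<forall>u\<in>V. inner (x - orth_proj V x) u = 0"
    using orth_proj_props[OF assms(1)] by auto
  show "v \<in> V" "\<forall>u\<in>V. inner (x - v) u = 0" using assms by auto
qed

lemma orth_proj_id:
  fixes V :: "'a::real_inner set"
  assumes "fin_dim V" "x \<in> V" shows "orth_proj V x = x"
  using orth_proj_eqI[OF assms(1,2)] by simp

lemma orth_proj_linear:
  fixes V :: "'a::real_inner set"
  assumes "fin_dim V" shows "linear (orth_proj V)"
proof
  note P = orth_proj_props[OF assms] 
  have S: "subspace V" by (rule fin_dim_subspace[OF assms])
  fix x y :: 'a and c :: real
  show "orth_proj V (x + y) = orth_proj V x + orth_proj V y"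
    apply (rule orth_proj_eqI[OF assms])
    using P S apply (simp add: subspace_add)
    using P(2)[of _ x] P(2)[of _ y] by (simp add: algebra_simps inner_diff_left inner_add_left)
  show "orth_proj V (c *\<^sub>R x) = c *\<^sub>R orth_proj V x"
    apply (rule orth_proj_eqI[OF assms])
    using P S apply (simp add: subspace_scale)
    using P(2)[of _ x] by (simp add: algebra_simps inner_diff_left)
qed

lemma orth_proj_pyth:
  fixes V :: "'a::real_inner set"
  assumes "fin_dim V"
  shows "(norm x)\<^sup>2 = (norm (orth_proj V x))\<^sup>2 + (norm (x - orth_proj V x))\<^sup>2"
proof -
  note P = orth_proj_props[OF assms]
  have "inner (x - orth_proj V x) (orth_proj V x) = 0" using P by blast
  then have "inner (orth_proj V x) (x - orth_proj V x) = 0" by (simp add: inner_commute)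
  then show ?thesis
    using norm_add_Pythagorean[of "orth_proj V x" "x - orth_proj V x"] by (simp add: orthogonal_def)
qed

lemma orth_proj_min:
  fixes V :: "'a::real_inner set"
  assumes "fin_dim V" "k \<in> V"
  shows "norm (x - orth_proj V x) \<le> norm (x - k)"
proof -
  note P = orth_proj_props[OF assms(1)]
  have S: "subspace V" by (rule fin_dim_subspace[OF assms(1)])
  have "orth_proj V x - k \<in> V" using P S assms by (simp add: subspace_diff)
  then have "inner (x - orth_proj V x) (orth_proj V x - k) = 0" using P by blast
  then have "(norm (x - k))\<^sup>2 = (norm (x - orth_proj V x))\<^sup>2 + (norm (orth_proj V x - k))\<^sup>2"
    using norm_add_Pythagorean[of "x - orth_proj V x" "orth_proj V x - k"] by (simp add: orthogonal_def)
  then have "(norm (x - orth_proj V x))\<^sup>2 \<le> (norm (x - k))\<^sup>2" by simp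
  then show ?thesis by (rule power2_le_imp_le[OF _ norm_ge_zero])
qed

lemma fin_dim_basis:
  fixes L :: "'a::real_inner set"
  assumes "fin_dim L"
  obtains B where "B \<subseteq> L" "independent B" "L \<subseteq> span B" "card B = dim L" "finite B"
proof -
  obtain F where F: "finite F" "span F = L" using assms fin_dim_def by blast
  obtain B where B: "B \<subseteq> L" "independent B" "L \<subseteq> span B" "card B = dim L"
    using basis_exists[of L] by blast
  have "B \<subseteq> span F" using B(1) F(2) by simp
  then have "finite B" using independent_span_bound[OF F(1) B(2)] by simp
  then show ?thesis by (rule that[OF B])
qed

lemma indep_card_le_dim:
  fixes K :: "'a::real_inner set"
  assumes "fin_dim K" "A \<subseteq> K" "independent A"
  shows "finite A \<and> card A \<le> dim K"
proof -
  obtain B where B: "B \<subseteq> K" "independent B" "K \<subseteq> span B" "card B = dim K" "finite B"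
    using fin_dim_basis[OF assms(1)] by blast
  have "A \<subseteq> span B" using assms(2) B(3) by blast
  then show ?thesis using independent_span_bound[OF B(5) assms(3)] B(4) by simp
qed

lemma proj_onto:
  fixes K L :: "'a::real_inner set"
  assumes fK: "fin_dim K" and fL: "fin_dim L" and dimeq: "dim L = dim K"
    and inj: "\<And>y. y \<in> L \<Longrightarrow> orth_proj K y = 0 \<Longrightarrow> y = 0"
    and zK: "z \<in> K"
  shows "\<exists>y\<in>L. orth_proj K y = z"
proof -
  let ?P = "orth_proj K"
  have linP: "linear ?P" by (rule orth_proj_linear[OF fK])
  have SL: "subspace L" by (rule fin_dim_subspace[OF fL])
  have SK: "subspace K" by (rule fin_dim_subspace[OF fK])
  obtain BL where BL: "BL \<subseteq> L" "independent BL" "L \<subseteq> span BL" "card BL = dim L" "finite BL"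
    using fin_dim_basis[OF fL] by blast
  have spanBL: "span BL \<subseteq> L" using BL(1) SL by (simp add: span_minimal)
  have injP: "inj_on ?P (span BL)"
  proof (rule inj_onI)
    fix x y assume xy: "x \<in> span BL" "y \<in> span BL" "?P x = ?P y"
    have "x - y \<in> L" using xy spanBL SL subspace_diff by blast
    moreover have "?P (x - y) = 0" using xy linear_diff[OF linP] by simp
    ultimately have "x - y = 0" using inj by blast
    then show "x = y" by simp
  qed
  define C where "C = ?P ` BL"
  have indC: "independent C" unfolding C_def
    by (rule linear_independent_injective_image[OF linP BL(2) injP])
  have finC: "finite C" using BL(5) C_def by simp
  have cardC: "card C = card BL" unfolding C_def
    by (rule card_image) (rule inj_on_subset[OF injP span_superset])
  have CK: "C \<subseteq> K" using orth_proj_props(1)[OF fK] C_def by auto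
  have "z \<in> span C"
  proof (rule ccontr)
    assume nz: "z \<notin> span C"
    have ind2: "independent (insert z C)" by (rule independent_insertI[OF nz indC])
    have "z \<notin> C" using nz span_superset by blast
    then have "card (insert z C) = card C + 1" using finC by simp
    moreover have "card (insert z C) \<le> dim K"
      using indep_card_le_dim[OF fK _ ind2] CK zK by auto
    ultimately show False using cardC BL(4) dimeq by simp
  qed
  then have "z \<in> ?P ` span BL" using span_linear_image[OF linP, of BL] C_def by simp
  then show ?thesis using spanBL by blast
qed



lemma core:
  fixes K L :: "'a::real_inner set" and d :: real
  assumes fK: "fin_dim K" and fL: "fin_dim L" and dimeq: "dim L = dim K"
    and d0: "0 \<le> d" and d1: "d < 1/2"
    and near: "\<And>y. y \<in> L \<Longrightarrow> norm (y - orth_proj K y) \<le> d * norm y"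
  shows "norm (orth_proj L x - orth_proj K x) \<le> d / sqrt (1 - 2*d) * norm x"
proof -
  let ?P = "orth_proj K" and ?Q = "orth_proj L"
  define C where "C = d\<^sup>2 / (1 - 2*d)"
  have pos: "1 - 2*d > 0" using d1 by simp
  have C0: "0 \<le> C" using pos by (simp add: C_def)
  have dC: "d\<^sup>2 \<le> C"
  proof -
    have "d\<^sup>2 * (1 - 2*d) \<le> d\<^sup>2" using d0 by (simp add: algebra_simps)
    then show ?thesis using pos by (simp add: C_def field_simps)
  qed
  note PK = orth_proj_props[OF fK] and QL = orth_proj_props[OF fL]
  have linP: "linear ?P" and linQ: "linear ?Q" using orth_proj_linear fK fL by auto
  have inj: "y = 0" if "y \<in> L" "?P y = 0" for y
  proof -
    have "norm y \<le> d * norm y" using near[OF that(1)] that(2) by simp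
    then have "norm y * (1 - d) \<le> 0" by (simp add: algebra_simps)
    then have "norm y \<le> 0" using d1 by (simp add: mult_le_0_iff)
    then show ?thesis by simp
  qed
  have s3: "(norm (z - ?Q z))\<^sup>2 \<le> C * (norm z)\<^sup>2" if zK: "z \<in> K" for z
  proof -
    obtain y where y: "y \<in> L" "?P y = z" using proj_onto[OF fK fL dimeq inj zK] by blast
    have a: "norm (z - ?Q z) \<le> d * norm y"
      using orth_proj_min[OF fL y(1), of z] near[OF y(1)] y(2) by (simp add: norm_minus_commute)
    have b: "(norm y)\<^sup>2 \<le> (norm z)\<^sup>2 + d\<^sup>2 * (norm y)\<^sup>2"
    proof -
      have "(norm (y - ?P y))\<^sup>2 \<le> (d * norm y)\<^sup>2"
        using near[OF y(1)] by (simp add: power_mono)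
      then show ?thesis using orth_proj_pyth[OF fK, of y] y(2) by (simp add: power_mult_distrib)
    qed
    have a2: "(norm (z - ?Q z))\<^sup>2 \<le> d\<^sup>2 * (norm y)\<^sup>2"
      using power_mono[OF a norm_ge_zero, of 2] by (simp add: power_mult_distrib)
    have "(norm (z - ?Q z))\<^sup>2 * (1 - 2*d) \<le> d\<^sup>2 * (norm y)\<^sup>2 * (1 - 2*d)"
      using a2 pos by (simp add: mult_right_mono)
    also have "\<dots> \<le> d\<^sup>2 * ((norm y)\<^sup>2 * (1 - d\<^sup>2))"
    proof -
      have "1 - 2*d \<le> 1 - d\<^sup>2" 
      proof -
        have "d * d \<le> 2 * d" using mult_right_mono[of d 2 d] d0 d1 by simp
        then show ?thesis by (simp add: power2_eq_square)
      qed
      then have "(norm y)\<^sup>2 * (1 - 2*d) \<le> (norm y)\<^sup>2 * (1 - d\<^sup>2)" by (simp add: mult_left_mono)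
      then have "d\<^sup>2 * ((norm y)\<^sup>2 * (1 - 2*d)) \<le> d\<^sup>2 * ((norm y)\<^sup>2 * (1 - d\<^sup>2))" by (simp add: mult_left_mono)
      then show ?thesis by (simp add: mult.assoc)
    qed
    also have "\<dots> \<le> d\<^sup>2 * (norm z)\<^sup>2"
      using b by (intro mult_left_mono) (auto simp: algebra_simps)
    finally show ?thesis using pos by (simp add: C_def field_simps)
  qed
  have s4: "(norm (?Q b))\<^sup>2 \<le> C * (norm b)\<^sup>2" if bK: "\<And>u. u \<in> K \<Longrightarrow> inner b u = 0" for b
  proof -
    have QbL: "?Q b \<in> L" using QL by blast
    have "(norm (?Q b))\<^sup>2 = inner (?Q b) (?Q b)" by (simp add: power2_norm_eq_inner)
    also have "\<dots> = inner b (?Q b)"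
      using QL(2)[OF QbL, of b] by (simp add: inner_diff_left)
    also have "\<dots> = inner b (?Q b - ?P (?Q b))"
      using bK[OF PK(1)] by (simp add: inner_diff_right)
    also have "\<dots> \<le> norm b * norm (?Q b - ?P (?Q b))" by (rule norm_cauchy_schwarz)
    also have "\<dots> \<le> norm b * (d * norm (?Q b))"
      using near[OF QbL] by (simp add: mult_left_mono)
    finally have ineq: "(norm (?Q b))\<^sup>2 \<le> norm b * (d * norm (?Q b))" .
    have "norm (?Q b) \<le> d * norm b"
    proof (cases "norm (?Q b) = 0")
      case True then show ?thesis using d0 by simp
    next
      case False
      then have "norm (?Q b) > 0" by simp
      then show ?thesis using ineq by (simp add: power2_eq_square algebra_simps)
    qed
    then have "(norm (?Q b))\<^sup>2 \<le> d\<^sup>2 * (norm b)\<^sup>2"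
      using power_mono[OF _ norm_ge_zero, of _ "d * norm b" 2] by (simp add: power_mult_distrib)
    also have "\<dots> \<le> C * (norm b)\<^sup>2" using dC by (simp add: mult_right_mono)
    finally show ?thesis .
  qed
  define a where "a = ?P x"
  define b where "b = x - ?P x"
  have aK: "a \<in> K" using PK a_def by blast
  have bK: "\<And>u. u \<in> K \<Longrightarrow> inner b u = 0" using PK b_def by blast
  have xab: "x = a + b" by (simp add: a_def b_def)
  have Qx: "?Q x = ?Q a + ?Q b" using linear_add[OF linQ, of a b] xab by simp
  have "?Q x - ?P x = (?Q a + ?Q b) - a" using Qx a_def by simp
  then have eq: "?Q x - ?P x = ?Q b + (?Q a - a)" by simp
  have orth: "orthogonal (?Q b) (?Q a - a)"
    using QL(2)[of "?Q b" a] QL(1)[of b] by (simp add: orthogonal_def inner_commute inner_diff_right)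
  have "(norm (?Q x - ?P x))\<^sup>2 = (norm (?Q b))\<^sup>2 + (norm (a - ?Q a))\<^sup>2"
    using norm_add_Pythagorean[OF orth] eq norm_minus_commute[of "?Q a" a] by simp
  also have "\<dots> \<le> C * (norm b)\<^sup>2 + C * (norm a)\<^sup>2"
    using s4[OF bK] s3[OF aK] by simp
  also have "\<dots> = C * (norm x)\<^sup>2"
    using orth_proj_pyth[OF fK, of x, folded a_def b_def] by (simp add: algebra_simps)
  finally have fin: "(norm (?Q x - ?P x))\<^sup>2 \<le> C * (norm x)\<^sup>2" .
  have "sqrt (C * (norm x)\<^sup>2) = d / sqrt (1 - 2*d) * norm x"
    using d0 pos by (simp add: C_def real_sqrt_mult real_sqrt_divide)
  moreover have "norm (?Q x - ?P x) \<le> sqrt (C * (norm x)\<^sup>2)"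
    using fin by (simp add: real_le_rsqrt)
  ultimately show ?thesis by simp
qed



lemma arcsin_lim: fixes k :: real shows "((\<lambda>l::real. arcsin (l * k / sqrt (1 - 2*l*k)) / l) \<longlongrightarrow> k) (at_right 0)"
proof -
  have "((\<lambda>l::real. arcsin (l * k / sqrt (1 - 2*l*k))) has_real_derivative k) (at 0)"
    by (rule derivative_eq_intros refl | simp)+
  then have "((\<lambda>l. (arcsin (l * k / sqrt (1 - 2*l*k)) - arcsin (0 * k / sqrt (1 - 2*0*k))) / (l - 0)) \<longlongrightarrow> k) (at 0)"
    by (simp add: has_field_derivative_iff)
  then have "((\<lambda>l::real. arcsin (l * k / sqrt (1 - 2*l*k)) / l) \<longlongrightarrow> k) (at 0)" by simp
  then show ?thesis by (simp add: filterlim_at_split)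
qed

lemma onorm_nonneg_bound:
  assumes "\<And>x. norm (f x) \<le> b * norm x" "0 \<le> b"
  shows "0 \<le> onorm f"
proof -
  have bdd: "bdd_above (range (\<lambda>x. norm (f x) / norm x))"
  proof (rule bdd_aboveI2)
    fix x show "norm (f x) / norm x \<le> b"
      using assms by (cases "norm x = 0") (auto simp: divide_le_eq mult.commute)
  qed
  have "(0::real) \<le> (SUP x. norm (f x) / norm x)"
    by (rule cSUP_upper2[OF bdd, of 0]) auto
  then show ?thesis by (simp add: onorm_def)
qed

lemma kappa_pos:
  fixes H0 G :: "'a::{real_inner, complete_space} \<Rightarrow>\<^sub>L 'a"
  assumes "norm H0 = 1" "refl_ginv H0 G"
  shows "kappa H0 G = norm G" "0 < kappa H0 G"
proof -
  show k: "kappa H0 G = norm G" using assms by (simp add: kappa_def)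
  have "G \<noteq> 0"
  proof
    assume "G = 0"
    then have "H0 = 0" using assms(2) by (simp add: refl_ginv_def)
    then show False using assms(1) by simp
  qed
  then show "0 < kappa H0 G" using k by simp
qed

lemma part1:
  fixes H0 G w :: "'a::{real_inner, complete_space} \<Rightarrow>\<^sub>L 'a"
  assumes H1: "norm H0 = 1"
    and fK: "fin_dim (kernel H0)"
    and rg: "refl_ginv H0 G"
    and w1: "norm w = 1"
    and l0: "0 \<le> l" and l1: "l < 1 / (2 * kappa H0 G)" and sk: "same_kernel_dim H0 w l"
  shows "sin_theta_max H0 w l \<le> l * kappa H0 G / sqrt (1 - 2 * l * kappa H0 G)"
    and "0 \<le> sin_theta_max H0 w l"
proof -
  define k where "k = kappa H0 G"
  have kG: "k = norm G" and kp: "0 < k" using kappa_pos[OF H1 rg] k_def by auto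
  define K where "K = kernel H0"
  define L where "L = kernel (H0 + l *\<^sub>R w)"
  have fL: "fin_dim L" and dimeq: "dim L = dim K" using sk by (auto simp: same_kernel_dim_def L_def K_def)
  have fK': "fin_dim K" using fK K_def by simp
  have d0: "0 \<le> l * k" using l0 kp by simp
  have d1: "l * k < 1/2" using l1 kp by (simp add: k_def field_simps)
  have HGH: "blinfun_apply H0 (blinfun_apply G (blinfun_apply H0 y)) = blinfun_apply H0 y" for y
  proof -
    have "blinfun_apply (H0 o\<^sub>L G o\<^sub>L H0) y = blinfun_apply H0 y" using rg by (simp add: refl_ginv_def)
    then show ?thesis by simp
  qed
  have near: "norm (y - orth_proj K y) \<le> (l * k) * norm y" if yL: "y \<in> L" for y
  proof -
    have Hy: "blinfun_apply H0 y = - (l *\<^sub>R blinfun_apply w y)"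
      using yL by (simp add: L_def kernel_def eq_neg_iff_add_eq_0 blinfun.add_left blinfun.scaleR_left)
    define kk where "kk = y - blinfun_apply G (blinfun_apply H0 y)"
    have kkK: "kk \<in> K" using HGH[of y] by (simp add: K_def kernel_def kk_def blinfun.diff_right)
    have "norm (y - orth_proj K y) \<le> norm (y - kk)" by (rule orth_proj_min[OF fK' kkK])
    also have "\<dots> = norm (blinfun_apply G (l *\<^sub>R blinfun_apply w y))"
      by (simp add: kk_def Hy blinfun.minus_right)
    also have "\<dots> \<le> norm G * norm (l *\<^sub>R blinfun_apply w y)" by (rule norm_blinfun)
    also have "\<dots> = norm G * (l * norm (blinfun_apply w y))" using l0 by simp
    also have "\<dots> \<le> norm G * (l * (norm w * norm y))"
      using l0 norm_blinfun[of w y] by (intro mult_left_mono) auto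
    finally show ?thesis using w1 kG by (simp add: mult.left_commute)
  qed
  have bnd: "norm (orth_proj L x - orth_proj K x) \<le> (l * k) / sqrt (1 - 2*(l * k)) * norm x" for x
    by (rule core[OF fK' fL dimeq d0 d1 near])
  have bpos: "0 \<le> (l * k) / sqrt (1 - 2*(l * k))" using d0 d1 by simp
  have "sin_theta_max H0 w l \<le> (l * k) / sqrt (1 - 2*(l * k))"
    unfolding sin_theta_max_def L_def[symmetric] K_def[symmetric] by (rule onorm_bound) (rule bpos, rule bnd)
  then show "sin_theta_max H0 w l \<le> l * kappa H0 G / sqrt (1 - 2 * l * kappa H0 G)"
    by (simp add: k_def mult.assoc)
  show "0 \<le> sin_theta_max H0 w l"
    unfolding sin_theta_max_def L_def[symmetric] K_def[symmetric] by (rule onorm_nonneg_bound[of _ "(l * k) / sqrt (1 - 2*(l * k))"]) (rule bnd, rule bpos)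
qed

lemma theta_zero: "theta_max H0 w 0 = 0"
  by (simp add: theta_max_def sin_theta_max_def onorm_zero)

lemma deriv_lim:
  assumes "(theta_max H0 w has_real_derivative D) (at_right 0)"
  shows "((\<lambda>l. theta_max H0 w l / l) \<longlongrightarrow> D) (at_right 0)"
  using assms by (simp add: has_field_derivative_iff theta_zero)

lemma part23:
  fixes H0 G w :: "'a::{real_inner, complete_space} \<Rightarrow>\<^sub>L 'a"
  assumes H1: "norm H0 = 1"
    and fK: "fin_dim (kernel H0)"
    and rg: "refl_ginv H0 G"
    and w1: "norm w = 1"
    and ev: "\<forall>\<^sub>F l in at_right 0. same_kernel_dim H0 w l"
  shows "Limsup (at_right 0) (\<lambda>l. ereal (theta_max H0 w l / l)) \<le> ereal (kappa H0 G)"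
    and "(\<exists>D. (theta_max H0 w has_real_derivative D) (at_right 0)) \<longrightarrow> sensitivity H0 w \<le> kappa H0 G"
proof -
  define k where "k = kappa H0 G"
  have kp: "0 < k" using kappa_pos[OF H1 rg] k_def by auto
  define b where "b = (\<lambda>l::real. l * k / sqrt (1 - 2 * l * k))"
  have "(b \<longlongrightarrow> 0 * k / sqrt (1 - 2 * 0 * k)) (at_right 0)"
    unfolding b_def by (intro tendsto_intros) auto
  then have bt: "(b \<longlongrightarrow> 0) (at_right 0)" by simp
  have e1: "\<forall>\<^sub>F l in at_right 0. b l < 1" by (rule order_tendstoD(2)[OF bt]) simp
  have e2: "\<forall>\<^sub>F l in at_right (0::real). l < 1 / (2 * k)"
    by (rule order_tendstoD(2)[OF tendsto_ident_at]) (simp add: kp)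
  have e3: "\<forall>\<^sub>F l in at_right (0::real). 0 < l" by (rule eventually_at_right_less)
  have evb: "\<forall>\<^sub>F l in at_right 0. ereal (theta_max H0 w l / l) \<le> ereal (arcsin (b l) / l)"
    using ev e1 e2 e3
  proof eventually_elim
    case (elim l)
    have s1: "sin_theta_max H0 w l \<le> b l" and s0: "0 \<le> sin_theta_max H0 w l"
      using part1[OF H1 fK rg w1, of l] elim by (auto simp: b_def k_def)
    have "arcsin (sin_theta_max H0 w l) \<le> arcsin (b l)"
      by (rule arcsin_le_arcsin) (use s0 s1 elim in auto)
    then show ?case using elim by (simp add: theta_max_def divide_right_mono)
  qed
  have "Limsup (at_right 0) (\<lambda>l. ereal (theta_max H0 w l / l)) \<le> Limsup (at_right 0) (\<lambda>l. ereal (arcsin (b l) / l))"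
    by (rule Limsup_mono[OF evb])
  also have "\<dots> = ereal k"
    by (rule lim_imp_Limsup) (simp_all add: b_def tendsto_ereal arcsin_lim)
  finally show LS: "Limsup (at_right 0) (\<lambda>l. ereal (theta_max H0 w l / l)) \<le> ereal (kappa H0 G)"
    by (simp add: k_def)
  show "(\<exists>D. (theta_max H0 w has_real_derivative D) (at_right 0)) \<longrightarrow> sensitivity H0 w \<le> kappa H0 G"
  proof
    assume "\<exists>D. (theta_max H0 w has_real_derivative D) (at_right 0)"
    then obtain D where D: "(theta_max H0 w has_real_derivative D) (at_right 0)" by blast
    have lim: "((\<lambda>l. theta_max H0 w l / l) \<longlongrightarrow> D) (at_right 0)" by (rule deriv_lim[OF D])
    have sD: "sensitivity H0 w = D"
      unfolding sensitivity_def
    proof (rule the_equality)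
      show "(theta_max H0 w has_real_derivative D) (at_right 0)" by (rule D)
    next
      fix D' assume "(theta_max H0 w has_real_derivative D') (at_right 0)"
      from deriv_lim[OF this] show "D' = D"
        by (rule tendsto_unique[OF trivial_limit_at_right_real _ lim])
    qed
    have "Limsup (at_right 0) (\<lambda>l. ereal (theta_max H0 w l / l)) = ereal D"
      by (rule lim_imp_Limsup) (simp_all add: tendsto_ereal lim)
    then show "sensitivity H0 w \<le> kappa H0 G" using LS sD by simp
  qed
qed


theorem mainTheorem15:
  fixes H0 G w :: "'a::{real_inner, complete_space} \<Rightarrow>\<^sub>L 'a"
  assumes "norm H0 = 1"
    and "fin_dim (kernel H0)"
    and "refl_ginv H0 G"
    and "norm w = 1"
  shows "(\<forall>l. 0 \<le> l \<and> l < 1 / (2 * kappa H0 G) \<and> same_kernel_dim H0 w l \<longrightarrow>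
            sin_theta_max H0 w l \<le> l * kappa H0 G / sqrt (1 - 2 * l * kappa H0 G))
       \<and> ((\<forall>\<^sub>F l in at_right 0. same_kernel_dim H0 w l) \<longrightarrow>
            Limsup (at_right 0) (\<lambda>l. ereal (theta_max H0 w l / l)) \<le> ereal (kappa H0 G))
       \<and> ((\<forall>\<^sub>F l in at_right 0. same_kernel_dim H0 w l) \<and>
           (\<exists>D. (theta_max H0 w has_real_derivative D) (at_right 0)) \<longrightarrow>
            sensitivity H0 w \<le> kappa H0 G)
       \<and> (\<forall>S. S \<noteq> {} \<and> (\<forall>v\<in>S. norm v = 1 \<and> (\<forall>\<^sub>F l in at_right 0. same_kernel_dim H0 v l) \<and>
                 (\<exists>D. (theta_max H0 v has_real_derivative D) (at_right 0))) \<longrightarrow>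
            (SUP v\<in>S. sensitivity H0 v) \<le> kappa H0 G)"
proof (intro conjI allI impI)
  fix l assume "0 \<le> l \<and> l < 1 / (2 * kappa H0 G) \<and> same_kernel_dim H0 w l"
  then show "sin_theta_max H0 w l \<le> l * kappa H0 G / sqrt (1 - 2 * l * kappa H0 G)"
    using part1(1)[OF assms(1-4)] by blast
next
  assume "\<forall>\<^sub>F l in at_right 0. same_kernel_dim H0 w l"
  then show "Limsup (at_right 0) (\<lambda>l. ereal (theta_max H0 w l / l)) \<le> ereal (kappa H0 G)"
    by (rule part23(1)[OF assms(1-4)])
next
  assume "(\<forall>\<^sub>F l in at_right 0. same_kernel_dim H0 w l) \<and>
           (\<exists>D. (theta_max H0 w has_real_derivative D) (at_right 0))"
  then show "sensitivity H0 w \<le> kappa H0 G"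
    using part23(2)[OF assms(1-4)] by blast
next
  fix S assume S: "S \<noteq> {} \<and> (\<forall>v\<in>S. norm v = 1 \<and> (\<forall>\<^sub>F l in at_right 0. same_kernel_dim H0 v l) \<and>
                 (\<exists>D. (theta_max H0 v has_real_derivative D) (at_right 0)))"
  show "(SUP v\<in>S. sensitivity H0 v) \<le> kappa H0 G"
  proof (rule cSUP_least)
    show "S \<noteq> {}" using S by blast
  next
    fix v assume "v \<in> S"
    then have v: "norm v = 1" "\<forall>\<^sub>F l in at_right 0. same_kernel_dim H0 v l"
      "\<exists>D. (theta_max H0 v has_real_derivative D) (at_right 0)" using S by auto
    show "sensitivity H0 v \<le> kappa H0 G"
      using part23(2)[OF assms(1-3) v(1) v(2)] v(3) by blast
  qed
qed

end
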